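(* Let $\beta\in\mathbb{R}\setminus\{0\}$ and let $\Gamma$ be a lattice in $\operatorname{PSL}(2,\mathbb{R})$ such that the stabilizer of $\infty$ in $\Gamma$ is $\Gamma_\infty=\{\pm\begin{pmatrix}1&k\\0&1\end{pmatrix}: k\in\mathbb{Z}\}$ and the stabilizer of $0$ in $\Gamma$ is $\Gamma_0=\{\pm\begin{pmatrix}1&0\\k\beta^2&1\end{pmatrix}: k\in\mathbb{Z}\}$ (acting by Möbius transformations). If $\mathrm{Tr}(\Gamma)$ has linear growth, then $A^2\in\operatorname{PSL}(2,\mathbb{Q})$ for every $A\in\Gamma$.
   Context: $\mathrm{Tr}(\Gamma)$ is the set of traces of all matrices in $\operatorname{SL}(2,\mathbb{R})$ projecting to elements of $\Gamma$ (so traces are taken up to sign). A set $A\subset\mathbb{R}$ has linear growth if there are constants $C,D>0$ with $\#\{a\in A: |a|\le n\}\le Cn+D$ for all $n$. $A^2\in\operatorname{PSL}(2,\mathbb{Q})$ means $A^2$ has a matrix representative with rational entries. *)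

theory Defs
  imports "HOL-Analysis.Analysis"
begin

text \<open>Matrices in SL(2,R) are elements of real^2^2 with determinant 1.
A subgroup of PSL(2,R) is represented by its full preimage in SL(2,R):
a subgroup of SL(2,R) containing -I (equivalently closed under negation).\<close>

type_synonym mat2 = "real^2^2"

definition SL2 :: "mat2 set" where
  "SL2 = {A. det A = 1}"

definition psl_subgroup :: "mat2 set \<Rightarrow> bool" where
  "psl_subgroup G \<longleftrightarrow> G \<subseteq> SL2 \<and> mat 1 \<in> G \<and>
     (\<forall>A\<in>G. \<forall>B\<in>G. A ** B \<in> G) \<and> (\<forall>A\<in>G. matrix_inv A \<in> G) \<and> (\<forall>A\<in>G. - A \<in> G)"

definition mobius :: "mat2 \<Rightarrow> complex \<Rightarrow> complex" where
  "mobius A z = (of_real (A$1$1) * z + of_real (A$1$2)) / (of_real (A$2$1) * z + of_real (A$2$2))"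

definition upper_half_plane :: "complex set" where
  "upper_half_plane = {z. Im z > 0}"

definition discrete_subgroup :: "mat2 set \<Rightarrow> bool" where
  "discrete_subgroup G \<longleftrightarrow> psl_subgroup G \<and>
     (\<forall>A\<in>G. \<exists>e>0. \<forall>B\<in>G. dist B A < e \<longrightarrow> B = A)"

definition fundamental_domain :: "mat2 set \<Rightarrow> complex set \<Rightarrow> bool" where
  "fundamental_domain G F \<longleftrightarrow> F \<subseteq> upper_half_plane \<and> F \<in> sets lebesgue \<and>
     (\<forall>z\<in>upper_half_plane. \<exists>A\<in>G. mobius A z \<in> F) \<and>
     (\<forall>w1\<in>F. \<forall>w2\<in>F. \<forall>A\<in>G. mobius A w1 = w2 \<longrightarrow> w1 = w2)"

definition hyp_area :: "complex set \<Rightarrow> ennreal" where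
  "hyp_area F = (\<integral>\<^sup>+ z. ennreal (1 / (Im z)^2) * indicator F z \<partial>lborel)"

text \<open>Lattice in PSL(2,R): discrete subgroup with finite covolume, i.e. admitting a
fundamental domain in H of finite hyperbolic area.\<close>
definition psl_lattice :: "mat2 set \<Rightarrow> bool" where
  "psl_lattice G \<longleftrightarrow> discrete_subgroup G \<and>
     (\<exists>F. fundamental_domain G F \<and> hyp_area F < \<infinity>)"

text \<open>Stabilizers of infinity (c = 0) and of 0 (b = 0) under the Moebius action z |-> (az+b)/(cz+d).\<close>
definition stab_infty :: "mat2 set \<Rightarrow> mat2 set" where
  "stab_infty G = {A\<in>G. A$2$1 = 0}"

definition stab_zero :: "mat2 set \<Rightarrow> mat2 set" where
  "stab_zero G = {A\<in>G. A$1$2 = 0}"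

definition traces :: "mat2 set \<Rightarrow> real set" where
  "traces G = {trace A | A. A \<in> G}"

definition linear_growth :: "real set \<Rightarrow> bool" where
  "linear_growth S \<longleftrightarrow> (\<exists>C>0. \<exists>D>0. \<forall>n::nat.
     finite {a\<in>S. \<bar>a\<bar> \<le> real n} \<and> real (card {a\<in>S. \<bar>a\<bar> \<le> real n}) \<le> C * real n + D)"

definition upper_unipotent :: "real \<Rightarrow> mat2" where
  "upper_unipotent t = vector [vector [1, t], vector [0, 1]]"

definition lower_unipotent :: "real \<Rightarrow> mat2" where
  "lower_unipotent t = vector [vector [1, 0], vector [t, 1]]"

definition rational_matrix :: "mat2 \<Rightarrow> bool" where
  "rational_matrix A \<longleftrightarrow> (\<forall>i j. A$i$j \<in> \<rat>)"

end

theory Submission imports Defs "HOL-Analysis.Harmonic_Numbers" begin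

lemma card_union_lower:
  fixes Q :: "nat \<Rightarrow> 'a set"
  assumes fin: "\<And>i. finite (Q i)"
    and int1: "\<And>i j. i \<noteq> j \<Longrightarrow> card (Q i \<inter> Q j) \<le> 1"
  shows "real (\<Sum>i<M. card (Q i)) \<le> real (card (\<Union>i<M. Q i)) + real M ^ 2"
proof (induction M)
  case 0 then show ?case by simp
next
  case (Suc M)
  let ?A = "\<Union>i<M. Q i"
  have finA: "finite ?A" using fin by auto
  have eq: "(\<Union>i<Suc M. Q i) = ?A \<union> Q M" by (auto simp: lessThan_Suc)
  have c1: "card (?A \<union> Q M) + card (?A \<inter> Q M) = card ?A + card (Q M)"
    using card_Un_Int[OF finA fin[of M]] by simp
  have "?A \<inter> Q M = (\<Union>i<M. Q i \<inter> Q M)" by auto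
  hence "card (?A \<inter> Q M) \<le> (\<Sum>i<M. card (Q i \<inter> Q M))"
    using card_UN_le[of "{..<M}" "\<lambda>i. Q i \<inter> Q M"] by simp
  also have "\<dots> \<le> (\<Sum>i<M. 1)" by (intro sum_mono int1) auto
  finally have c2: "card (?A \<inter> Q M) \<le> M" by simp
  have "real (\<Sum>i<Suc M. card (Q i)) = real (\<Sum>i<M. card (Q i)) + real (card (Q M))" by simp
  also have "\<dots> \<le> real (card ?A) + real M ^ 2 + real (card (Q M))" using Suc by simp
  also have "\<dots> = real (card (?A \<union> Q M)) + real (card (?A \<inter> Q M)) + real M ^ 2"
    using c1 by (simp add: of_nat_add[symmetric] del: of_nat_add)
  also have "\<dots> \<le> real (card (?A \<union> Q M)) + real M + real M ^ 2" using c2 by simp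
  also have "\<dots> \<le> real (card (\<Union>i<Suc M. Q i)) + real (Suc M) ^ 2"
    unfolding eq by (simp add: power2_eq_square algebra_simps)
  finally show ?case .
qed

lemma prog_card:
  fixes u x :: real and n :: nat
  assumes x: "x \<noteq> 0"
  shows "2 * ((real n - \<bar>u\<bar>) / \<bar>x\<bar>) - 1 \<le> real (card {v. (\<exists>k::int. v = u + of_int k * x) \<and> \<bar>v\<bar> \<le> real n})"
proof -
  define z where "z = (real n - \<bar>u\<bar>) / \<bar>x\<bar>"
  define K where "K = \<lfloor>z\<rfloor>"
  show ?thesis
  proof (cases "K < 0")
    case True
    hence "z < 0" unfolding K_def by linarith
    hence "2 * z - 1 \<le> real (card {v. (\<exists>k::int. v = u + of_int k * x) \<and> \<bar>v\<bar> \<le> real n})"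
      using of_nat_0_le_iff[of "card {v. (\<exists>k::int. v = u + of_int k * x) \<and> \<bar>v\<bar> \<le> real n}"] by linarith
    then show ?thesis unfolding z_def .
  next
    case False
    have sub: "(\<lambda>k. u + of_int k * x) ` {-K..K} \<subseteq> {v. (\<exists>k::int. v = u + of_int k * x) \<and> \<bar>v\<bar> \<le> real n}"
    proof
      fix v assume "v \<in> (\<lambda>k. u + of_int k * x) ` {-K..K}"
      then obtain k where k: "k \<in> {-K..K}" "v = u + of_int k * x" by auto
      have "\<bar>k\<bar> \<le> \<lfloor>z\<rfloor>" using k(1) unfolding K_def by auto
      hence "\<bar>of_int k\<bar> \<le> z" by linarith
      hence "\<bar>of_int k\<bar> * \<bar>x\<bar> \<le> real n - \<bar>u\<bar>" unfolding z_def using x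
        by (simp add: pos_le_divide_eq)
      hence "\<bar>v\<bar> \<le> real n" unfolding k(2)
        using abs_triangle_ineq[of u "of_int k * x"] by (simp add: abs_mult)
      thus "v \<in> {v. (\<exists>k::int. v = u + of_int k * x) \<and> \<bar>v\<bar> \<le> real n}" using k by auto
    qed
    have fin: "finite {v. (\<exists>k::int. v = u + of_int k * x) \<and> \<bar>v\<bar> \<le> real n}"
    proof -
      have "{v. (\<exists>k::int. v = u + of_int k * x) \<and> \<bar>v\<bar> \<le> real n} \<subseteq>
            (\<lambda>k. u + of_int k * x) ` {-(\<lceil>(real n + \<bar>u\<bar>) / \<bar>x\<bar>\<rceil>)..\<lceil>(real n + \<bar>u\<bar>) / \<bar>x\<bar>\<rceil>}"
      proof
        fix v assume "v \<in> {v. (\<exists>k::int. v = u + of_int k * x) \<and> \<bar>v\<bar> \<le> real n}"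
        then obtain k where k: "v = u + of_int k * x" "\<bar>v\<bar> \<le> real n" by auto
        have "\<bar>of_int k * x\<bar> \<le> \<bar>v\<bar> + \<bar>u\<bar>" using abs_triangle_ineq4[of v u] k(1) by simp
        hence "\<bar>of_int k\<bar> * \<bar>x\<bar> \<le> real n + \<bar>u\<bar>" using k(2) by (simp add: abs_mult)
        hence "\<bar>of_int k\<bar> \<le> (real n + \<bar>u\<bar>) / \<bar>x\<bar>" using x by (simp add: pos_le_divide_eq)
        hence "\<bar>k\<bar> \<le> \<lceil>(real n + \<bar>u\<bar>) / \<bar>x\<bar>\<rceil>" by linarith
        hence "k \<in> {-(\<lceil>(real n + \<bar>u\<bar>) / \<bar>x\<bar>\<rceil>)..\<lceil>(real n + \<bar>u\<bar>) / \<bar>x\<bar>\<rceil>}" by auto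
        thus "v \<in> (\<lambda>k. u + of_int k * x) ` {-(\<lceil>(real n + \<bar>u\<bar>) / \<bar>x\<bar>\<rceil>)..\<lceil>(real n + \<bar>u\<bar>) / \<bar>x\<bar>\<rceil>}"
          using k(1) by (auto intro: rev_image_eqI)
      qed
      thus ?thesis by (rule finite_subset) auto
    qed
    have inj: "inj_on (\<lambda>k. u + of_int k * x) {-K..K}" using x by (auto simp: inj_on_def)
    have "card {-K..K} \<le> card {v. (\<exists>k::int. v = u + of_int k * x) \<and> \<bar>v\<bar> \<le> real n}"
      using card_mono[OF fin sub] card_image[OF inj] by simp
    moreover have "card {-K..K} = nat (2*K+1)" using False by simp
    ultimately have "real_of_int (2*K+1) \<le> real (card {v. (\<exists>k::int. v = u + of_int k * x) \<and> \<bar>v\<bar> \<le> real n})"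
      using False by linarith
    moreover have "z < of_int K + 1" unfolding K_def by linarith
    ultimately show ?thesis unfolding z_def[symmetric] by simp
  qed
qed

lemma prog_contra:
  fixes T :: "real set" and u :: "nat \<Rightarrow> real" and y r :: real
  assumes lg: "linear_growth T" and y: "y \<noteq> 0" and r: "r \<notin> \<rat>"
    and mem: "\<And>(m::nat) (k::int). u m + of_int k * (y * (r + real m)) \<in> T"
  shows False
proof -
  define x where "x m = y * (r + real m)" for m
  have rm: "r + real m \<noteq> 0" for m
  proof
    assume "r + real m = 0"
    hence "r = - of_nat m" by simp
    thus False using r by simp
  qed
  have x0: "x m \<noteq> 0" for m using rm y unfolding x_def by simp
  obtain C D where CD: "C > 0" "D > 0" and
    lgn: "\<And>n::nat. finite {a\<in>T. \<bar>a\<bar> \<le> real n} \<and> real (card {a\<in>T. \<bar>a\<bar> \<le> real n}) \<le> C * real n + D"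
    using lg unfolding linear_growth_def by blast
  define P where "P m = {v. \<exists>k::int. v = u m + of_int k * x m}" for m
  have inter: "card (P m \<inter> P m' \<inter> S) \<le> 1" if "m \<noteq> m'" "finite S" for m m' S
  proof -
    have "\<forall>v1\<in>P m \<inter> P m' \<inter> S. \<forall>v2\<in>P m \<inter> P m' \<inter> S. v1 = v2"
    proof (intro ballI)
      fix v1 v2 assume v1: "v1 \<in> P m \<inter> P m' \<inter> S" and v2: "v2 \<in> P m \<inter> P m' \<inter> S"
      obtain k1 k1' k2 k2' where e: "v1 = u m + of_int k1 * x m" "v1 = u m' + of_int k1' * x m'"
        "v2 = u m + of_int k2 * x m" "v2 = u m' + of_int k2' * x m'"
        using v1 v2 unfolding P_def by blast
      have d: "of_int (k1 - k2) * x m = of_int (k1' - k2') * x m'"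
        using e by (simp add: algebra_simps)
      show "v1 = v2"
      proof (cases "k1 = k2")
        case True thus ?thesis using e by simp
      next
        case False
        define j where "j = k1 - k2 - (k1' - k2')"
        have d2: "of_int (k1 - k2) * (r + real m) = of_int (k1' - k2') * (r + real m')"
        proof -
          have "y * (of_int (k1 - k2) * (r + real m)) = y * (of_int (k1' - k2') * (r + real m'))"
            using d unfolding x_def by (metis mult.left_commute)
          thus ?thesis using y by simp
        qed
        hence d3: "r * of_int j = of_int (k1' - k2') * real m' - of_int (k1 - k2) * real m"
          unfolding j_def by (simp add: algebra_simps)
        show ?thesis
        proof (cases "j = 0")
          case True
          hence e0: "k1' - k2' = k1 - k2" unfolding j_def by simp
          have "of_int (k1 - k2) * (r + real m) = of_int (k1 - k2) * (r + real m')" using d2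
            by (simp only: e0)
          hence "r + real m = r + real m'" using False by simp
          hence "m = m'" by simp
          thus ?thesis using that by simp
        next
          case False
          hence "r = (of_int (k1' - k2') * real m' - of_int (k1 - k2) * real m) / of_int j"
            using d3 by (simp add: field_simps)
          hence "r \<in> \<rat>" by simp
          thus ?thesis using r by simp
        qed
      qed
    qed
    thus ?thesis using that(2) card_le_Suc0_iff_eq[of "P m \<inter> P m' \<inter> S"] by simp
  qed
  define B where "B = (C + 1) * (\<bar>y\<bar> * (\<bar>r\<bar> + 1)) / 2"
  define M where "M = nat \<lceil>exp B\<rceil>"
  have "B \<le> ln (real M + 1)"
  proof -
    have "exp B \<le> real M + 1" unfolding M_def by linarith
    hence "ln (exp B) \<le> ln (real M + 1)" by (subst ln_le_cancel_iff) auto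
    thus ?thesis by simp
  qed
  also have "\<dots> \<le> harm M" by (rule ln_le_harm)
  finally have hB: "B \<le> harm M" .
  define S where "S = (\<Sum>m<M. 1 / \<bar>x m\<bar>)"
  have "harm M / (\<bar>y\<bar> * (\<bar>r\<bar> + 1)) \<le> S"
  proof -
    have "harm M / (\<bar>y\<bar> * (\<bar>r\<bar> + 1)) = (\<Sum>m<M. 1 / (\<bar>y\<bar> * (\<bar>r\<bar> + 1) * real (Suc m)))"
      unfolding harm_altdef by (simp add: sum_divide_distrib divide_simps mult_ac)
    also have "\<dots> \<le> S" unfolding S_def
    proof (intro sum_mono)
      fix m assume "m \<in> {..<M}"
      have pos: "0 < \<bar>x m\<bar>" using x0 by simp
      have "\<bar>x m\<bar> \<le> \<bar>y\<bar> * (\<bar>r\<bar> + 1) * real (Suc m)"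
      proof -
        have t1: "\<bar>r + real m\<bar> \<le> \<bar>r\<bar> + real m" using abs_triangle_ineq[of r "real m"] by simp
        have t2: "0 \<le> \<bar>r\<bar> * real m" by simp
        have t3: "(\<bar>r\<bar> + 1) * real (Suc m) = \<bar>r\<bar> * real m + \<bar>r\<bar> + real m + 1"
          by (simp add: algebra_simps)
        have "\<bar>r + real m\<bar> \<le> (\<bar>r\<bar> + 1) * real (Suc m)" unfolding t3 using t1 t2 by linarith
        thus ?thesis unfolding x_def abs_mult using mult_left_mono[of _ _ "\<bar>y\<bar>"]
          by (simp add: mult.assoc)
      qed
      thus "1 / (\<bar>y\<bar> * (\<bar>r\<bar> + 1) * real (Suc m)) \<le> 1 / \<bar>x m\<bar>"
        using pos by (simp add: frac_le)
    qed
    finally show ?thesis .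
  qed
  moreover have Kp: "0 < \<bar>y\<bar> * (\<bar>r\<bar> + 1)" using y
    by (simp add: add_pos_nonneg)
  moreover have "B / (\<bar>y\<bar> * (\<bar>r\<bar> + 1)) \<le> harm M / (\<bar>y\<bar> * (\<bar>r\<bar> + 1))"
    using hB Kp by (simp add: divide_right_mono)
  ultimately have "B / (\<bar>y\<bar> * (\<bar>r\<bar> + 1)) \<le> S" by linarith
  moreover have "B / (\<bar>y\<bar> * (\<bar>r\<bar> + 1)) = (C + 1) / 2"
  proof -
    have gen: "Kc > 0 \<Longrightarrow> (C + 1) * Kc / 2 / Kc = (C + 1) / 2" for Kc :: real by simp
    show ?thesis unfolding B_def by (rule gen[OF Kp])
  qed
  ultimately have "(C + 1) / 2 \<le> S" by simp
  hence S2: "C + 1 \<le> 2 * S" by simp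
  define K0 where "K0 = (\<Sum>m<M. 2 * \<bar>u m\<bar> / \<bar>x m\<bar> + 1)"
  have bound: "real n * (2 * S - C) \<le> D + real M ^ 2 + K0" for n :: nat
  proof -
    define W where "W = {a\<in>T. \<bar>a\<bar> \<le> real n}"
    have finW: "finite W" using lgn unfolding W_def by blast
    define Q where "Q m = P m \<inter> W" for m
    have finQ: "finite (Q m)" for m using finW unfolding Q_def by simp
    have Qeq: "Q m = {v. (\<exists>k::int. v = u m + of_int k * x m) \<and> \<bar>v\<bar> \<le> real n}" for m
      unfolding Q_def P_def W_def using mem x_def by auto
    have "(\<Sum>m<M. 2 * ((real n - \<bar>u m\<bar>) / \<bar>x m\<bar>) - 1) \<le> (\<Sum>m<M. real (card (Q m)))"
      by (intro sum_mono) (unfold Qeq, rule prog_card[OF x0])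
    also have "\<dots> = real (\<Sum>m<M. card (Q m))" by simp
    also have "\<dots> \<le> real (card (\<Union>m<M. Q m)) + real M ^ 2"
    proof (rule card_union_lower[OF finQ])
      fix i j :: nat assume ij: "i \<noteq> j"
      have "Q i \<inter> Q j = P i \<inter> P j \<inter> W" unfolding Q_def by blast
      thus "card (Q i \<inter> Q j) \<le> 1" using inter[OF ij finW] by simp
    qed
    also have "card (\<Union>m<M. Q m) \<le> card W"
      by (rule card_mono[OF finW]) (auto simp: Q_def)
    hence "real (card (\<Union>m<M. Q m)) \<le> C * real n + D" using lgn[of n] unfolding W_def by linarith
    finally have "(\<Sum>m<M. 2 * ((real n - \<bar>u m\<bar>) / \<bar>x m\<bar>) - 1) \<le> C * real n + D + real M ^ 2"
      by simp
    moreover have "(\<Sum>m<M. 2 * ((real n - \<bar>u m\<bar>) / \<bar>x m\<bar>) - 1) = real n * (2 * S) - K0"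
    proof -
      have hh: "2 * ((nn - a) / X) - 1 = nn * (2 * (1 / X)) - (2 * a / X + 1)" for nn a X :: real
        by (cases "X = 0") (simp_all add: field_simps)
      show ?thesis
        unfolding S_def K0_def sum_distrib_left sum_subtractf[symmetric]
        by (intro sum.cong) (simp_all only: hh)
    qed
    ultimately show ?thesis by (simp add: algebra_simps)
  qed
  define n where "n = nat \<lceil>D + real M ^ 2 + K0\<rceil> + 1"
  have "real n > D + real M ^ 2 + K0" unfolding n_def by linarith
  moreover have "real n \<le> real n * (2 * S - C)" using S2
    by (simp add: mult_left_mono[of 1 "2*S - C" "real n", simplified])
  ultimately show False using bound[of n] by linarith
qed

lemma tr_UL:
  fixes A :: mat2
  shows "trace ((A ** upper_unipotent x) ** lower_unipotent y) =
     A$1$1 + A$2$2 + A$2$1 * x + A$1$2 * y + A$1$1 * x * y"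
  by (simp add: trace_def sum_2 matrix_matrix_mult_def upper_unipotent_def lower_unipotent_def algebra_simps)

lemma tr_LU:
  fixes A :: mat2
  shows "trace ((A ** lower_unipotent y) ** upper_unipotent x) =
     A$1$1 + A$2$2 + A$2$1 * x + A$1$2 * y + A$2$2 * x * y"
  by (simp add: trace_def sum_2 matrix_matrix_mult_def upper_unipotent_def lower_unipotent_def algebra_simps)

lemma sq_entries:
  fixes A :: mat2
  shows "(A ** A)$1$1 = A$1$1*A$1$1 + A$1$2*A$2$1" "(A ** A)$1$2 = A$1$1*A$1$2 + A$1$2*A$2$2"
   "(A ** A)$2$1 = A$2$1*A$1$1 + A$2$2*A$2$1" "(A ** A)$2$2 = A$2$1*A$1$2 + A$2$2*A$2$2"
  by (simp_all add: sum_2 matrix_matrix_mult_def)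

lemma rat_mat_iff: "rational_matrix (A::mat2) \<longleftrightarrow> A$1$1 \<in> \<rat> \<and> A$1$2 \<in> \<rat> \<and> A$2$1 \<in> \<rat> \<and> A$2$2 \<in> \<rat>"
  unfolding rational_matrix_def by (simp add: forall_2)

lemma scaled_sq:
  fixes A :: mat2 and l p q r s :: real
  assumes "l * l \<in> \<rat>" "A$1$1 = l * p" "A$1$2 = l * q" "A$2$1 = l * r" "A$2$2 = l * s"
    "p \<in> \<rat>" "q \<in> \<rat>" "r \<in> \<rat>" "s \<in> \<rat>"
  shows "rational_matrix (A ** A)"
proof -
  have e: "(l*x)*(l*y) + (l*z)*(l*w) = (l*l) * (x*y + z*w)" for x y z w :: real
    by (simp add: distrib_left mult_ac)
  have h: "x \<in> \<rat> \<Longrightarrow> (l * l) * x \<in> \<rat>" for x using assms(1) by (rule Rats_mult)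
  have pq: "p * p + q * r \<in> \<rat>" "p * q + q * s \<in> \<rat>" "r * p + s * r \<in> \<rat>" "r * q + s * s \<in> \<rat>"
    using assms(6-9) by (simp_all add: Rats_add Rats_mult)
  show ?thesis unfolding rat_mat_iff sq_entries assms(2-5) e
    using h[OF pq(1)] h[OF pq(2)] h[OF pq(3)] h[OF pq(4)] by (intro conjI)
qed

lemma ratio_UL:
  fixes G :: "mat2 set" and A :: mat2 and \<beta> :: real
  assumes lg: "linear_growth (traces G)" and b0: "\<beta> \<noteq> 0"
    and mem: "\<And>k m::int. trace ((A ** upper_unipotent (of_int k)) ** lower_unipotent (of_int m * \<beta>^2)) \<in> traces G"
    and a: "A$1$1 \<noteq> 0"
  shows "A$1$2 / A$1$1 \<in> \<rat>" "A$2$1 / (\<beta>^2 * A$1$1) \<in> \<rat>"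
proof -
  show "A$1$2 / A$1$1 \<in> \<rat>"
  proof (rule ccontr)
    assume nr: "A$1$2 / A$1$1 \<notin> \<rat>"
    show False
    proof (rule prog_contra[OF lg _ nr])
      show "\<beta>^2 * A$1$1 \<noteq> 0" using a b0 by simp
      fix k :: nat and m :: int
      have "trace ((A ** upper_unipotent (of_int (int k))) ** lower_unipotent (of_int m * \<beta>^2)) \<in> traces G"
        by (rule mem)
      moreover have "trace ((A ** upper_unipotent (of_int (int k))) ** lower_unipotent (of_int m * \<beta>^2))
         = (A$1$1 + A$2$2 + A$2$1 * real k) + of_int m * (\<beta>^2 * A$1$1 * (A$1$2 / A$1$1 + real k))"
      proof -
        have "\<beta>^2 * A$1$1 * (A$1$2 / A$1$1 + real k) = \<beta>^2 * A$1$2 + \<beta>^2 * A$1$1 * real k"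
          using a by (simp add: distrib_left)
        thus ?thesis unfolding tr_UL by (simp add: algebra_simps)
      qed
      ultimately show "(A$1$1 + A$2$2 + A$2$1 * real k) + of_int m * (\<beta>^2 * A$1$1 * (A$1$2 / A$1$1 + real k)) \<in> traces G"
        by simp
    qed
  qed
  show "A$2$1 / (\<beta>^2 * A$1$1) \<in> \<rat>"
  proof (rule ccontr)
    assume nr: "A$2$1 / (\<beta>^2 * A$1$1) \<notin> \<rat>"
    show False
    proof (rule prog_contra[OF lg _ nr])
      show "\<beta>^2 * A$1$1 \<noteq> 0" using a b0 by simp
      fix m :: nat and k :: int
      have "trace ((A ** upper_unipotent (of_int k)) ** lower_unipotent (of_int (int m) * \<beta>^2)) \<in> traces G"
        by (rule mem)
      moreover have "trace ((A ** upper_unipotent (of_int k)) ** lower_unipotent (of_int (int m) * \<beta>^2))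
         = (A$1$1 + A$2$2 + A$1$2 * (real m * \<beta>^2)) + of_int k * (\<beta>^2 * A$1$1 * (A$2$1 / (\<beta>^2 * A$1$1) + real m))"
      proof -
        have "\<beta>^2 * A$1$1 * (A$2$1 / (\<beta>^2 * A$1$1) + real m) = A$2$1 + \<beta>^2 * A$1$1 * real m"
          using a b0 by (simp add: distrib_left)
        thus ?thesis unfolding tr_UL by (simp add: algebra_simps)
      qed
      ultimately show "(A$1$1 + A$2$2 + A$1$2 * (real m * \<beta>^2)) + of_int k * (\<beta>^2 * A$1$1 * (A$2$1 / (\<beta>^2 * A$1$1) + real m)) \<in> traces G"
        by simp
    qed
  qed
qed

lemma ratio_LU:
  fixes G :: "mat2 set" and A :: mat2 and \<beta> :: real
  assumes lg: "linear_growth (traces G)" and b0: "\<beta> \<noteq> 0"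
    and mem: "\<And>k m::int. trace ((A ** lower_unipotent (of_int m * \<beta>^2)) ** upper_unipotent (of_int k)) \<in> traces G"
    and a: "A$2$2 \<noteq> 0"
  shows "A$1$2 / A$2$2 \<in> \<rat>" "A$2$1 / (\<beta>^2 * A$2$2) \<in> \<rat>"
proof -
  show "A$1$2 / A$2$2 \<in> \<rat>"
  proof (rule ccontr)
    assume nr: "A$1$2 / A$2$2 \<notin> \<rat>"
    show False
    proof (rule prog_contra[OF lg _ nr])
      show "\<beta>^2 * A$2$2 \<noteq> 0" using a b0 by simp
      fix k :: nat and m :: int
      have "trace ((A ** lower_unipotent (of_int m * \<beta>^2)) ** upper_unipotent (of_int (int k))) \<in> traces G"
        by (rule mem)
      moreover have "trace ((A ** lower_unipotent (of_int m * \<beta>^2)) ** upper_unipotent (of_int (int k)))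
         = (A$1$1 + A$2$2 + A$2$1 * real k) + of_int m * (\<beta>^2 * A$2$2 * (A$1$2 / A$2$2 + real k))"
      proof -
        have "\<beta>^2 * A$2$2 * (A$1$2 / A$2$2 + real k) = \<beta>^2 * A$1$2 + \<beta>^2 * A$2$2 * real k"
          using a by (simp add: distrib_left)
        thus ?thesis unfolding tr_LU by (simp add: algebra_simps)
      qed
      ultimately show "(A$1$1 + A$2$2 + A$2$1 * real k) + of_int m * (\<beta>^2 * A$2$2 * (A$1$2 / A$2$2 + real k)) \<in> traces G"
        by simp
    qed
  qed
  show "A$2$1 / (\<beta>^2 * A$2$2) \<in> \<rat>"
  proof (rule ccontr)
    assume nr: "A$2$1 / (\<beta>^2 * A$2$2) \<notin> \<rat>"
    show False
    proof (rule prog_contra[OF lg _ nr])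
      show "\<beta>^2 * A$2$2 \<noteq> 0" using a b0 by simp
      fix m :: nat and k :: int
      have "trace ((A ** lower_unipotent (of_int (int m) * \<beta>^2)) ** upper_unipotent (of_int k)) \<in> traces G"
        by (rule mem)
      moreover have "trace ((A ** lower_unipotent (of_int (int m) * \<beta>^2)) ** upper_unipotent (of_int k))
         = (A$1$1 + A$2$2 + A$1$2 * (real m * \<beta>^2)) + of_int k * (\<beta>^2 * A$2$2 * (A$2$1 / (\<beta>^2 * A$2$2) + real m))"
      proof -
        have "\<beta>^2 * A$2$2 * (A$2$1 / (\<beta>^2 * A$2$2) + real m) = A$2$1 + \<beta>^2 * A$2$2 * real m"
          using a b0 by (simp add: distrib_left)
        thus ?thesis unfolding tr_LU by (simp add: algebra_simps)
      qed
      ultimately show "(A$1$1 + A$2$2 + A$1$2 * (real m * \<beta>^2)) + of_int k * (\<beta>^2 * A$2$2 * (A$2$1 / (\<beta>^2 * A$2$2) + real m)) \<in> traces G"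
        by simp
    qed
  qed
qed

theorem lemma3p1:
  fixes \<beta> :: real and G :: "mat2 set"
  assumes "\<beta> \<noteq> 0"
    and "psl_lattice G"
    and "stab_infty G = {s *\<^sub>R upper_unipotent (of_int k) | s k. s \<in> {1, -1} \<and> k \<in> (UNIV :: int set)}"
    and "stab_zero G = {s *\<^sub>R lower_unipotent (of_int k * \<beta>^2) | s k. s \<in> {1, -1} \<and> k \<in> (UNIV :: int set)}"
    and "linear_growth (traces G)"
  shows "\<forall>A\<in>G. \<exists>s\<in>{1, -1::real}. rational_matrix (s *\<^sub>R (A ** A))"
proof -
  from assms(2) have psl: "psl_subgroup G" by (simp add: psl_lattice_def discrete_subgroup_def)
  have mult: "A \<in> G \<Longrightarrow> B \<in> G \<Longrightarrow> A ** B \<in> G" for A B using psl unfolding psl_subgroup_def by auto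
  have detG: "A \<in> G \<Longrightarrow> det A = 1" for A using psl unfolding psl_subgroup_def SL2_def by auto
  have U: "upper_unipotent (of_int k) \<in> G" for k
  proof -
    have "1 *\<^sub>R upper_unipotent (of_int k) \<in> stab_infty G" using assms(3) by blast
    thus ?thesis by (simp add: stab_infty_def)
  qed
  have L: "lower_unipotent (of_int k * \<beta>^2) \<in> G" for k
  proof -
    have "1 *\<^sub>R lower_unipotent (of_int k * \<beta>^2) \<in> stab_zero G" using assms(4) by blast
    thus ?thesis by (simp add: stab_zero_def)
  qed
  have trUL: "trace ((A ** upper_unipotent (of_int k)) ** lower_unipotent (of_int m * \<beta>^2)) \<in> traces G"
    if "A \<in> G" for A k m unfolding traces_def using mult[OF mult[OF that U] L] by blast
  have trLU: "trace ((A ** lower_unipotent (of_int m * \<beta>^2)) ** upper_unipotent (of_int k)) \<in> traces G"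
    if "A \<in> G" for A k m unfolding traces_def using mult[OF mult[OF that L] U] by blast
  note R1 = ratio_UL[OF assms(5) assms(1) trUL]
  note R2 = ratio_LU[OF assms(5) assms(1) trLU]
  define A0 where "A0 = upper_unipotent (of_int 1) ** lower_unipotent (of_int 1 * \<beta>^2)"
  have A0G: "A0 \<in> G" unfolding A0_def by (rule mult[OF U L])
  have A0e: "A0$1$1 = 1 + \<beta>^2" "A0$1$2 = 1"
    unfolding A0_def by (simp_all add: matrix_matrix_mult_def sum_2 upper_unipotent_def lower_unipotent_def)
  have "A0$1$1 \<noteq> 0" unfolding A0e using zero_le_power2[of \<beta>] by linarith
  hence "1 / (1 + \<beta>^2) \<in> \<rat>" using R1(1)[OF A0G] A0e by simp
  hence "1 + \<beta>^2 \<in> \<rat>" by (metis Rats_inverse inverse_eq_divide inverse_inverse_eq)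
  hence bq: "\<beta>^2 \<in> \<rat>" by (metis Rats_1 Rats_diff add_diff_cancel_left')
  show ?thesis
  proof
    fix A assume AG: "A \<in> G"
    define a where "a = A$1$1"
    define b where "b = A$1$2"
    define c where "c = A$2$1"
    define d where "d = A$2$2"
    have det: "a * d - b * c = 1" using detG[OF AG] unfolding det_2 a_def b_def c_def d_def by simp
    have ex: "\<exists>l p q r s. l * l \<in> \<rat> \<and> a = l * p \<and> b = l * q \<and> c = l * r \<and> d = l * s \<and>
         p \<in> \<rat> \<and> q \<in> \<rat> \<and> r \<in> \<rat> \<and> s \<in> \<rat>" if nz: "a \<noteq> 0 \<or> d \<noteq> 0"
    proof -
      have "\<exists>l p q r s. l \<noteq> 0 \<and> a = l * p \<and> b = l * q \<and> c = l * r \<and> d = l * s \<and>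
         p \<in> \<rat> \<and> q \<in> \<rat> \<and> r \<in> \<rat> \<and> s \<in> \<rat>"
      proof (cases "a \<noteq> 0")
        case True
        have q1: "b / a \<in> \<rat>" using R1(1)[OF AG] True unfolding a_def b_def by simp
        have "c / (\<beta>^2 * a) \<in> \<rat>" using R1(2)[OF AG] True unfolding a_def c_def by simp
        hence q2: "c / a \<in> \<rat>" using bq Rats_mult assms(1)
          by (metis (no_types, lifting) divide_divide_eq_left' nonzero_mult_div_cancel_left power_not_zero times_divide_eq_right)
        have q3: "d / a \<in> \<rat>"
        proof (cases "d = 0")
          case True thus ?thesis by simp
        next
          case False
          have "b / d \<in> \<rat>" using R2(1)[OF AG] False unfolding d_def b_def by simp
          show ?thesis
          proof (cases "b = 0")
            case True
            have "A \<in> stab_zero G" using AG True unfolding stab_zero_def b_def by simp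
            then obtain s k where sk: "s \<in> {1,-1}" "A = s *\<^sub>R lower_unipotent (of_int k * \<beta>^2)"
              using assms(4) by auto
            hence "a = s" "d = s" unfolding a_def d_def by (auto simp: lower_unipotent_def)
            thus ?thesis using sk(1) by auto
          next
            case False
            have "d / a = (b / a) / (b / d)" using False \<open>d \<noteq> 0\<close> by simp
            thus ?thesis using q1 \<open>b / d \<in> \<rat>\<close> by (metis Rats_divide)
          qed
        qed
        show ?thesis
          by (rule exI[of _ a], rule exI[of _ 1], rule exI[of _ "b/a"], rule exI[of _ "c/a"], rule exI[of _ "d/a"])
            (use True q1 q2 q3 in simp)
      next
        case False
        hence d0: "d \<noteq> 0" using nz by simp
        have q1: "b / d \<in> \<rat>" using R2(1)[OF AG] d0 unfolding d_def b_def by simp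
        have "c / (\<beta>^2 * d) \<in> \<rat>" using R2(2)[OF AG] d0 unfolding d_def c_def by simp
        hence q2: "c / d \<in> \<rat>" using bq Rats_mult assms(1)
          by (metis (no_types, lifting) divide_divide_eq_left' nonzero_mult_div_cancel_left power_not_zero times_divide_eq_right)
        show ?thesis
          by (rule exI[of _ d], rule exI[of _ 0], rule exI[of _ "b/d"], rule exI[of _ "c/d"], rule exI[of _ 1])
            (use False d0 q1 q2 in simp)
      qed
      then obtain l p q r s where h: "l \<noteq> 0" "a = l * p" "b = l * q" "c = l * r" "d = l * s"
         "p \<in> \<rat>" "q \<in> \<rat>" "r \<in> \<rat>" "s \<in> \<rat>" by blast
      have E: "(l * l) * (p * s - q * r) = 1" using det unfolding h(2-5) by (simp add: algebra_simps)
      hence ne: "p * s - q * r \<noteq> 0" by auto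
      have "l * l = 1 / (p * s - q * r)" using E ne by (simp add: eq_divide_eq)
      hence "l * l \<in> \<rat>" using h(6-9) by simp
      thus ?thesis using h by blast
    qed
    have "rational_matrix (A ** A)"
    proof (cases "a = 0 \<and> d = 0")
      case True
      hence "b * c = -1" using det by simp
      thus ?thesis unfolding rat_mat_iff sq_entries using True
        unfolding a_def b_def c_def d_def by (simp add: mult.commute)
    next
      case False
      then obtain l p q r s where "l * l \<in> \<rat>" "a = l * p" "b = l * q" "c = l * r" "d = l * s"
         "p \<in> \<rat>" "q \<in> \<rat>" "r \<in> \<rat>" "s \<in> \<rat>" using ex by blast
      thus ?thesis using scaled_sq unfolding a_def b_def c_def d_def by blast
    qed
    thus "\<exists>s\<in>{1, -1::real}. rational_matrix (s *\<^sub>R (A ** A))" by force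
  qed
qed

end
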